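(* Let $\mathbf P=(P,\leq,{}',0,1)$ be a finite pseudo-orthomodular poset, and put $M(x,y)=L(U(x,y'),y)$ and $R(x,y)=L(U(L(x,y),x'))$. Then the Dedekind-MacNeille completion $\mathrm{DM}(\mathbf P)$ is a complete orthomodular lattice. Moreover, $\mathrm{DM}(\mathbf P)$ is a left residuated lattice with respect to the operations $x\odot y=(x\vee y')\wedge y$ and $x\to y=(x\wedge y)\vee x'$ obtained from $M$ and $R$ by the DM-transformation.
   Context: For $M\subseteq P$, $U(M)$, $L(M)$ are the sets of upper and lower bounds; $U(a,b)=U(\{a,b\})$, $L(a,b)=L(\{a,b\})$. A poset with complementation is a bounded poset with antitone involution $'$ ($x\le y\Rightarrow y'\le x'$, $x''=x$) with $L(x,x')=\{0\}$, $U(x,x')=\{1\}$; it is pseudo-orthomodular if $L(U(L(x,y),y'),y)=L(x,y)$ for all $x,y$. The Dedekind-MacNeille completion $\mathrm{DM}(\mathbf P)$ is the complete lattice of subsets $B\subseteq P$ with $L(U(B))=B$ under inclusion, $P$ embedded via $x\mapsto L(\{x\})$, with antitone involution $X'=L(\{u'\mid u\in X\})$. The DM-transformation replaces $U(x,y)$ or $LU(x,y)$ by $x\vee y$ and $L(x,y)$ by $x\wedge y$. A lattice with complementation is orthomodular if $x\vee y=((x\vee y)\wedge y')\vee y$. A lattice with top $1$ is left residuated with respect to binary operations $\odot,\to$ if $x\odot 1=x=1\odot x$ and $x\odot y\le z\iff x\le y\to z$ for all $x,y,z$. *)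

theory Defs
  imports Main "HOL-Algebra.Complete_Lattice"
begin

text \<open>Posets are modelled by a finite type with a bounded partial order
  (class order_bot / order_top); 0 is Orderings.bot and 1 is Orderings.top.\<close>

definition Ub :: "'a::order set \<Rightarrow> 'a set" where
  "Ub M = {x. \<forall>m\<in>M. m \<le> x}"

definition Lb :: "'a::order set \<Rightarrow> 'a set" where
  "Lb M = {x. \<forall>m\<in>M. x \<le> m}"

definition poset_with_complementation :: "('a::{order_bot,order_top} \<Rightarrow> 'a) \<Rightarrow> bool" where
  "poset_with_complementation c \<longleftrightarrow>
     (\<forall>x y. x \<le> y \<longrightarrow> c y \<le> c x) \<and> (\<forall>x. c (c x) = x) \<and>
     (\<forall>x. Lb {x, c x} = {Orderings.bot}) \<and> (\<forall>x. Ub {x, c x} = {Orderings.top})"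

definition pseudo_orthomodular :: "('a::order \<Rightarrow> 'a) \<Rightarrow> bool" where
  "pseudo_orthomodular c \<longleftrightarrow>
     (\<forall>x y. Lb (Ub (Lb {x, y} \<union> {c y}) \<union> {y}) = Lb {x, y})"

definition DM_set :: "'a::order set set" where
  "DM_set = {B. Lb (Ub B) = B}"

definition DM :: "'a::order set gorder" where
  "DM = \<lparr>carrier = DM_set, eq = (=), le = (\<subseteq>)\<rparr>"

definition DM_comp :: "('a::order \<Rightarrow> 'a) \<Rightarrow> 'a set \<Rightarrow> 'a set" where
  "DM_comp c X = Lb (c ` X)"

definition lattice_with_complementation :: "('a, 'b) gorder_scheme \<Rightarrow> ('a \<Rightarrow> 'a) \<Rightarrow> bool" where
  "lattice_with_complementation L n \<longleftrightarrow>
     bounded_lattice L \<and>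
     (\<forall>x\<in>carrier L. n x \<in> carrier L \<and> n (n x) = x \<and>
        x \<sqinter>\<^bsub>L\<^esub> n x = \<bottom>\<^bsub>L\<^esub> \<and> x \<squnion>\<^bsub>L\<^esub> n x = \<top>\<^bsub>L\<^esub>) \<and>
     (\<forall>x\<in>carrier L. \<forall>y\<in>carrier L. x \<sqsubseteq>\<^bsub>L\<^esub> y \<longrightarrow> n y \<sqsubseteq>\<^bsub>L\<^esub> n x)"

definition orthomodular_lattice :: "('a, 'b) gorder_scheme \<Rightarrow> ('a \<Rightarrow> 'a) \<Rightarrow> bool" where
  "orthomodular_lattice L n \<longleftrightarrow>
     lattice_with_complementation L n \<and>
     (\<forall>x\<in>carrier L. \<forall>y\<in>carrier L.
        x \<squnion>\<^bsub>L\<^esub> y = ((x \<squnion>\<^bsub>L\<^esub> y) \<sqinter>\<^bsub>L\<^esub> n y) \<squnion>\<^bsub>L\<^esub> y)"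

definition left_residuated :: "('a, 'b) gorder_scheme \<Rightarrow> ('a \<Rightarrow> 'a \<Rightarrow> 'a) \<Rightarrow> ('a \<Rightarrow> 'a \<Rightarrow> 'a) \<Rightarrow> bool" where
  "left_residuated L m i \<longleftrightarrow>
     lattice L \<and>
     (\<forall>x\<in>carrier L. \<forall>y\<in>carrier L. m x y \<in> carrier L \<and> i x y \<in> carrier L) \<and>
     (\<forall>x\<in>carrier L. m x \<top>\<^bsub>L\<^esub> = x \<and> m \<top>\<^bsub>L\<^esub> x = x) \<and>
     (\<forall>x\<in>carrier L. \<forall>y\<in>carrier L. \<forall>z\<in>carrier L.
        m x y \<sqsubseteq>\<^bsub>L\<^esub> z \<longleftrightarrow> x \<sqsubseteq>\<^bsub>L\<^esub> i y z)"

definition DM_odot :: "('a::order \<Rightarrow> 'a) \<Rightarrow> 'a set \<Rightarrow> 'a set \<Rightarrow> 'a set" where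
  "DM_odot c X Y = (X \<squnion>\<^bsub>DM\<^esub> DM_comp c Y) \<sqinter>\<^bsub>DM\<^esub> Y"

definition DM_arrow :: "('a::order \<Rightarrow> 'a) \<Rightarrow> 'a set \<Rightarrow> 'a set \<Rightarrow> 'a set" where
  "DM_arrow c X Y = (X \<sqinter>\<^bsub>DM\<^esub> Y) \<squnion>\<^bsub>DM\<^esub> DM_comp c X"

end

theory Submission imports Defs begin

lemma Lb_anti: "A \<subseteq> B \<Longrightarrow> Lb B \<subseteq> Lb A" by (auto simp: Lb_def)
lemma Ub_anti: "A \<subseteq> B \<Longrightarrow> Ub B \<subseteq> Ub A" by (auto simp: Ub_def)
lemma sub_LbUb: "A \<subseteq> Lb (Ub A)" by (auto simp: Lb_def Ub_def)
lemma sub_UbLb: "A \<subseteq> Ub (Lb A)" by (auto simp: Lb_def Ub_def)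
lemma closed_Lb: "Lb S \<in> DM_set"
  unfolding DM_set_def using Lb_anti[OF sub_UbLb[of S]] sub_LbUb[of "Lb S"] by blast
lemma closed_Inter: "F \<subseteq> DM_set \<Longrightarrow> \<Inter>F \<in> DM_set"
proof -
  assume F: "F \<subseteq> DM_set"
  have "Lb (Ub (\<Inter>F)) \<subseteq> B" if "B \<in> F" for B
  proof -
    have "\<Inter>F \<subseteq> B" using that by blast
    hence "Lb (Ub (\<Inter>F)) \<subseteq> Lb (Ub B)" by (intro Lb_anti Ub_anti)
    thus ?thesis using F that by (auto simp: DM_set_def)
  qed
  hence "Lb (Ub (\<Inter>F)) \<subseteq> \<Inter>F" by blast
  thus ?thesis unfolding DM_set_def using sub_LbUb by blast
qed
lemma closed_mem: "X \<in> DM_set \<Longrightarrow> p \<in> X \<longleftrightarrow> (\<forall>u\<in>Ub X. p \<le> u)"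
proof -
  assume "X \<in> DM_set"
  hence "X = Lb (Ub X)" unfolding DM_set_def by simp
  hence "p \<in> X \<longleftrightarrow> p \<in> Lb (Ub X)" by simp
  thus ?thesis unfolding Lb_def by simp
qed
lemma UNIV_closed: "UNIV \<in> DM_set"
  unfolding DM_set_def by (auto simp: Lb_def Ub_def)

typedef (overloaded) ('a::order) dm = "DM_set :: 'a set set" morphisms Rep_dm Abs_dm
  using UNIV_closed by blast

lemma Rep_closed: "Rep_dm x \<in> DM_set" using Rep_dm by blast

instantiation dm :: (order) bounded_lattice
begin
definition "less_eq_dm x y \<longleftrightarrow> Rep_dm x \<subseteq> Rep_dm y"
definition "less_dm x y \<longleftrightarrow> Rep_dm x \<subset> Rep_dm y"
definition "inf_dm x y = Abs_dm (Rep_dm x \<inter> Rep_dm y)"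
definition "sup_dm x y = Abs_dm (Lb (Ub (Rep_dm x \<union> Rep_dm y)))"
definition "bot_dm = Abs_dm (Lb UNIV)"
definition "top_dm = Abs_dm UNIV"

lemma Rep_inf: "Rep_dm (inf x y) = Rep_dm x \<inter> Rep_dm y"
proof -
  have "Rep_dm x \<inter> Rep_dm y \<in> DM_set" using closed_Inter[of "{Rep_dm x, Rep_dm y}"] Rep_closed by auto
  thus ?thesis unfolding inf_dm_def by (simp add: Abs_dm_inverse)
qed
lemma Rep_sup: "Rep_dm (sup x y) = Lb (Ub (Rep_dm x \<union> Rep_dm y))"
  unfolding sup_dm_def by (simp add: Abs_dm_inverse closed_Lb)
lemma Rep_bot: "Rep_dm (bot::'a dm) = Lb UNIV"
  unfolding bot_dm_def by (simp add: Abs_dm_inverse closed_Lb)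
lemma Rep_top: "Rep_dm (Orderings.top::'a dm) = UNIV"
  unfolding top_dm_def by (simp add: Abs_dm_inverse UNIV_closed)

instance
proof
  fix x y z :: "'a dm"
  show "(x < y) = (x \<le> y \<and> \<not> y \<le> x)" unfolding less_eq_dm_def less_dm_def by auto
  show "x \<le> x" unfolding less_eq_dm_def by blast
  show "x \<le> y \<Longrightarrow> y \<le> z \<Longrightarrow> x \<le> z" unfolding less_eq_dm_def by blast
  show "x \<le> y \<Longrightarrow> y \<le> x \<Longrightarrow> x = y" unfolding less_eq_dm_def by (simp add: Rep_dm_inject)
  show "inf x y \<le> x" "inf x y \<le> y" unfolding less_eq_dm_def Rep_inf by auto
  show "x \<le> y \<Longrightarrow> x \<le> z \<Longrightarrow> x \<le> inf y z" unfolding less_eq_dm_def Rep_inf by auto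
  show "x \<le> sup x y" "y \<le> sup x y" unfolding less_eq_dm_def Rep_sup
    using sub_LbUb[of "Rep_dm x \<union> Rep_dm y"] by auto
  show "sup y z \<le> x" if "y \<le> x" "z \<le> x"
  proof -
    have "Rep_dm y \<union> Rep_dm z \<subseteq> Rep_dm x" using that unfolding less_eq_dm_def by blast
    hence "Lb (Ub (Rep_dm y \<union> Rep_dm z)) \<subseteq> Lb (Ub (Rep_dm x))" by (intro Lb_anti Ub_anti)
    also have "\<dots> = Rep_dm x" using Rep_closed[of x] unfolding DM_set_def by blast
    finally show ?thesis unfolding less_eq_dm_def Rep_sup .
  qed
  show "bot \<le> x"
  proof -
    have "Lb UNIV \<subseteq> Lb (Ub (Rep_dm x))" by (intro Lb_anti) blast
    also have "\<dots> = Rep_dm x" using Rep_closed[of x] unfolding DM_set_def by blast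
    finally show ?thesis unfolding less_eq_dm_def Rep_bot .
  qed
  show "x \<le> Orderings.top" unfolding less_eq_dm_def Rep_top by blast
qed
end

lemma dm_le_iff: "x \<le> y \<longleftrightarrow> Rep_dm x \<subseteq> Rep_dm y" by (simp add: less_eq_dm_def)

locale ortho =
  fixes n :: "'b::bounded_lattice \<Rightarrow> 'b"
  assumes nn: "n (n x) = x" and anti: "x \<le> y \<Longrightarrow> n y \<le> n x" and inf_n: "inf x (n x) = bot"
begin

lemma n_le_iff: "n x \<le> n y \<longleftrightarrow> y \<le> x" by (metis anti nn)

lemma n_sup: "n (sup x y) = inf (n x) (n y)"
proof (rule order.antisym)
  show "n (sup x y) \<le> inf (n x) (n y)" by (simp add: anti)
  have "x \<le> n (inf (n x) (n y))" "y \<le> n (inf (n x) (n y))"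
    by (metis inf_le1 inf_le2 n_le_iff nn)+
  hence "sup x y \<le> n (inf (n x) (n y))" by simp
  thus "inf (n x) (n y) \<le> n (sup x y)" by (metis n_le_iff nn)
qed

lemma n_inf: "n (inf x y) = sup (n x) (n y)"
  by (metis n_sup nn)

lemma n_bot: "n bot = Orderings.top"
  by (metis bot_least n_le_iff nn top.extremum_unique)

lemma n_top: "n Orderings.top = bot" by (metis n_bot nn)

lemma sup_n: "sup x (n x) = Orderings.top"
  by (metis inf_commute inf_n n_bot n_inf nn)

definition Q :: "'b \<Rightarrow> bool" where
  "Q x \<longleftrightarrow> (\<forall>B. x \<le> B \<longrightarrow> B = sup (inf B (n x)) x)"
definition Q' :: "'b \<Rightarrow> bool" where
  "Q' y \<longleftrightarrow> (\<forall>C. C \<le> y \<longrightarrow> C = inf (sup C (n y)) y)"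

lemma Q'_Q: "Q' y \<Longrightarrow> Q (n y)"
  unfolding Q_def Q'_def
proof (intro allI impI)
  fix B assume h: "\<forall>C. C \<le> y \<longrightarrow> C = inf (sup C (n y)) y" and b: "n y \<le> B"
  have "n B \<le> y" by (metis b n_le_iff nn)
  hence "n B = inf (sup (n B) (n y)) y" using h by blast
  hence "n (n B) = n (inf (sup (n B) (n y)) y)" by simp
  thus "B = sup (inf B (n (n y))) (n y)" by (simp add: n_inf n_sup nn)
qed

lemma Q_Q': "Q x \<Longrightarrow> Q' (n x)"
  unfolding Q_def Q'_def
proof (intro allI impI)
  fix C assume h: "\<forall>B. x \<le> B \<longrightarrow> B = sup (inf B (n x)) x" and c: "C \<le> n x"
  have "x \<le> n C" by (metis c n_le_iff nn)
  hence "n C = sup (inf (n C) (n x)) x" using h by blast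
  hence "n (n C) = n (sup (inf (n C) (n x)) x)" by simp
  thus "C = inf (sup C (n (n x))) (n x)" by (simp add: n_inf n_sup nn)
qed

lemma Q_bot: "Q bot" unfolding Q_def by (simp add: n_bot)

lemma Q_step:
  assumes x1: "bot < x1" "x1 < x" and Q1: "Q x1" and IH: "\<And>y. y < x \<Longrightarrow> Q y"
  shows "Q x"
  unfolding Q_def
proof (intro allI impI)
  fix B assume xB: "x \<le> B"
  define Y where "Y = inf x (n x1)"
  have 1: "B = sup (inf B (n x1)) x1" using Q1 xB x1 unfolding Q_def by auto
  have 2: "x = sup Y x1" using Q1 x1 unfolding Q_def Y_def by auto
  have "Y < x"
  proof -
    have "Y \<le> x" by (simp add: Y_def)
    moreover have "Y \<noteq> x"
    proof
      assume "Y = x"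
      hence "x \<le> n x1" by (metis Y_def inf.cobounded2)
      hence "x1 \<le> n x1" using x1 by simp
      hence "x1 = bot" by (metis inf.absorb1 inf_n)
      thus False using x1 by simp
    qed
    ultimately show ?thesis by simp
  qed
  hence QY: "Q Y" by (rule IH)
  have "Y \<le> inf B (n x1)" using xB by (simp add: Y_def le_infI1)
  hence 3: "inf B (n x1) = sup (inf (inf B (n x1)) (n Y)) Y" using QY unfolding Q_def by blast
  have 4: "n x = inf (sup (n x) x1) (n x1)"
  proof -
    have "n x = n (sup Y x1)" using 2 by simp
    thus ?thesis by (simp add: n_sup n_inf nn Y_def)
  qed
  have 5: "inf (inf B (n x1)) (n Y) = inf B (n x)"
  proof -
    have "n Y = sup (n x) x1" by (simp add: Y_def n_inf nn)
    hence "inf (inf B (n x1)) (n Y) = inf B (inf (sup (n x) x1) (n x1))"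
      by (simp add: inf_assoc inf_commute inf_left_commute)
    thus ?thesis using 4 by simp
  qed
  have "B = sup (sup (inf B (n x)) Y) x1" using 1 3 5 by simp
  also have "\<dots> = sup (inf B (n x)) (sup Y x1)" by (simp add: sup_assoc)
  also have "\<dots> = sup (inf B (n x)) x" using 2 by simp
  finally show "B = sup (inf B (n x)) x" .
qed

lemma Q_all:
  assumes fin: "finite (UNIV :: 'b set)"
    and at: "\<And>a. bot < a \<Longrightarrow> (\<And>y. bot < y \<Longrightarrow> y < a \<Longrightarrow> False) \<Longrightarrow> Q a"
  shows "Q x"
proof (induction x rule: measure_induct_rule[where f="\<lambda>x. card {y. y < x}"])
  case (less x)
  have IH: "Q y" if "y < x" for y
  proof -
    have "{z. z < y} \<subset> {z. z < x}" using that by auto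
    hence "card {z. z < y} < card {z. z < x}"
      by (intro psubset_card_mono) (auto intro: finite_subset[OF _ fin])
    thus ?thesis using less by blast
  qed
  show "Q x"
  proof (cases "x = bot")
    case True thus ?thesis using Q_bot by simp
  next
    case False
    hence bx: "bot < x" by (simp add: bot.not_eq_extremum)
    show ?thesis
    proof (cases "\<exists>y. bot < y \<and> y < x")
      case True
      then obtain y where "bot < y" "y < x" by blast
      thus ?thesis using Q_step IH by blast
    next
      case False thus ?thesis using at bx by blast
    qed
  qed
qed

lemma Q'_all:
  assumes "\<And>x. Q x" shows "Q' y"
  by (metis Q_Q' assms nn)

lemma oml: assumes "\<And>x. Q x" shows "sup x y = sup (inf (sup x y) (n y)) y"
  using assms unfolding Q_def by simp

lemma resid:
  assumes "\<And>x. Q x"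
  shows "inf (sup x (n y)) y \<le> z \<longleftrightarrow> x \<le> sup (inf y z) (n y)"
proof
  assume h: "inf (sup x (n y)) y \<le> z"
  have "sup x (n y) = sup (inf (sup x (n y)) (n (n y))) (n y)"
    using assms[of "n y"] unfolding Q_def by simp
  also have "\<dots> \<le> sup (inf y z) (n y)" using h by (simp add: nn le_supI1)
  finally show "x \<le> sup (inf y z) (n y)" by simp
next
  assume h: "x \<le> sup (inf y z) (n y)"
  have "sup x (n y) \<le> sup (inf y z) (n y)" using h by (simp add: le_supI1)
  hence "inf (sup x (n y)) y \<le> inf (sup (inf y z) (n y)) y" by (simp add: le_infI1)
  also have "\<dots> = inf y z" using Q'_all[OF assms, of y] unfolding Q'_def by (metis inf_le1)
  finally show "inf (sup x (n y)) y \<le> z" by simp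
qed

end

lemma dm_finite: "finite (UNIV :: ('a::{finite,order}) dm set)"
proof -
  have "finite (DM_set :: 'a set set)" by (rule finite_subset[of _ UNIV]) auto
  hence "finite (Abs_dm ` (DM_set :: 'a set set))" by (rule finite_imageI)
  thus ?thesis using type_definition.Abs_image[OF type_definition_dm] by metis
qed

definition ncomp :: "('a::order \<Rightarrow> 'a) \<Rightarrow> 'a dm \<Rightarrow> 'a dm" where
  "ncomp c x = Abs_dm (Lb (c ` Rep_dm x))"

lemma Rep_ncomp: "Rep_dm (ncomp c x) = Lb (c ` Rep_dm x)"
  unfolding ncomp_def by (simp add: Abs_dm_inverse closed_Lb)

definition pr :: "'a::order \<Rightarrow> 'a dm" where "pr p = Abs_dm (Lb {p})"

lemma Rep_pr: "Rep_dm (pr p) = Lb {p}"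
  unfolding pr_def by (simp add: Abs_dm_inverse closed_Lb)

lemma Lb_UNIV_bot: "Lb (UNIV :: ('a::order_bot) set) = {bot}"
  by (auto simp: Lb_def intro: order.antisym)

lemma bot_in_closed: "X \<in> DM_set \<Longrightarrow> (bot::'a::order_bot) \<in> X"
proof -
  assume X: "X \<in> DM_set"
  show ?thesis using closed_mem[OF X, of bot] by simp
qed

context
  fixes c :: "'a::{order_bot,order_top} \<Rightarrow> 'a"
  assumes pwc: "poset_with_complementation c"
begin

lemma c_anti: "x \<le> y \<Longrightarrow> c y \<le> c x" using pwc unfolding poset_with_complementation_def by blast
lemma cc: "c (c x) = x" using pwc unfolding poset_with_complementation_def by blast
lemma c_le_iff: "c x \<le> c y \<longleftrightarrow> y \<le> x" by (metis c_anti cc)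
lemma Lb_xc: "Lb {x, c x} = {bot}" using pwc unfolding poset_with_complementation_def by blast

lemma c_img_Lb: "c ` Lb (c ` X) = Ub X"
proof
  show "c ` Lb (c ` X) \<subseteq> Ub X"
  proof
    fix q assume "q \<in> c ` Lb (c ` X)"
    then obtain p where q: "q = c p" and p: "p \<in> Lb (c ` X)" by blast
    have "u \<le> q" if "u \<in> X" for u
    proof -
      have "p \<le> c u" using p that unfolding Lb_def by blast
      thus ?thesis using q c_le_iff cc by metis
    qed
    thus "q \<in> Ub X" unfolding Ub_def by blast
  qed
  show "Ub X \<subseteq> c ` Lb (c ` X)"
  proof
    fix q assume q: "q \<in> Ub X"
    have "c q \<in> Lb (c ` X)" using q unfolding Lb_def Ub_def by (auto intro: c_anti)
    thus "q \<in> c ` Lb (c ` X)" using cc by (metis image_eqI)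
  qed
qed

lemma ortho_ncomp: "ortho (ncomp c)"
proof
  fix x y :: "'a dm"
  have "Rep_dm (ncomp c (ncomp c x)) = Lb (Ub (Rep_dm x))"
    by (simp add: Rep_ncomp c_img_Lb)
  also have "\<dots> = Rep_dm x" using Rep_closed[of x] unfolding DM_set_def by simp
  finally show "ncomp c (ncomp c x) = x" by (simp add: Rep_dm_inject)
  show "x \<le> y \<Longrightarrow> ncomp c y \<le> ncomp c x"
    unfolding dm_le_iff Rep_ncomp by (intro Lb_anti image_mono)
  have "Rep_dm x \<inter> Lb (c ` Rep_dm x) = {bot}"
  proof
    show "Rep_dm x \<inter> Lb (c ` Rep_dm x) \<subseteq> {bot}"
    proof
      fix p assume p: "p \<in> Rep_dm x \<inter> Lb (c ` Rep_dm x)"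
      hence "p \<le> c p" unfolding Lb_def by blast
      hence "p \<in> Lb {p, c p}" unfolding Lb_def by auto
      thus "p \<in> {bot}" using Lb_xc by blast
    qed
    show "{bot} \<subseteq> Rep_dm x \<inter> Lb (c ` Rep_dm x)"
      using bot_in_closed[OF Rep_closed[of x]] by (auto simp: Lb_def)
  qed
  hence "Rep_dm (Lattices.inf x (ncomp c x)) = Rep_dm (bot :: 'a dm)"
    by (simp add: Rep_inf Rep_ncomp Rep_bot Lb_UNIV_bot)
  thus "Lattices.inf x (ncomp c x) = bot" by (simp add: Rep_dm_inject)
qed

lemma ncomp_pr: "ncomp c (pr p) = pr (c p)"
proof -
  have "Lb (c ` Lb {p}) = Lb {c p}"
    unfolding Lb_def by (auto intro: order_trans c_anti)
  hence "Rep_dm (ncomp c (pr p)) = Rep_dm (pr (c p))" by (simp add: Rep_ncomp Rep_pr)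
  thus ?thesis by (simp add: Rep_dm_inject)
qed

lemma pr_inf: "Rep_dm (Lattices.inf (pr u) (pr r)) = Lb {u, r}"
  unfolding Rep_inf Rep_pr Lb_def by auto

lemma po_dm:
  assumes po: "pseudo_orthomodular c"
  shows "Lattices.inf (Lattices.sup (Lattices.inf (pr u) (pr r)) (pr (c r))) (pr r) = Lattices.inf (pr u) (pr r)"
proof -
  have e: "Lb (Ub (Lb {u, r} \<union> {c r}) \<union> {r}) = Lb {u, r}"
    using po unfolding pseudo_orthomodular_def by blast
  have u: "Ub (Lb {u, r} \<union> Lb {c r}) = Ub (Lb {u, r} \<union> {c r})"
    unfolding Ub_def Lb_def by (auto intro: order_trans)
  have l: "Lb S \<inter> Lb {r} = Lb (S \<union> {r})" for S :: "'a set"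
    unfolding Lb_def by auto
  have "Rep_dm (Lattices.inf (Lattices.sup (Lattices.inf (pr u) (pr r)) (pr (c r))) (pr r))
      = Lb (Ub (Lb {u, r} \<union> Lb {c r})) \<inter> Lb {r}"
  proof -
    have i: "Lb {u} \<inter> Lb {r} = Lb {u, r}" by (auto simp: Lb_def)
    show ?thesis by (simp add: Rep_inf Rep_sup Rep_pr i)
  qed
  also have "\<dots> = Lb {u, r}" using u l e by simp
  also have "\<dots> = Rep_dm (Lattices.inf (pr u) (pr r))" by (simp add: pr_inf)
  finally show ?thesis by (simp add: Rep_dm_inject)
qed

end


context
  fixes c :: "'a::{finite,order_bot,order_top} \<Rightarrow> 'a"
  assumes pwc: "poset_with_complementation c" and po: "pseudo_orthomodular c"
begin

lemma Q'_pr: "ortho.Q' (ncomp c) (pr r)"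
proof -
  interpret O: ortho "ncomp c" by (rule ortho_ncomp[OF pwc])
  show ?thesis unfolding O.Q'_def
  proof (intro allI impI)
    fix C assume C: "C \<le> pr r"
    define D where "D = Lattices.inf (Lattices.sup C (ncomp c (pr r))) (pr r)"
    have "C \<le> D" using C by (simp add: D_def)
    moreover have "D \<le> C"
    proof -
      have Du: "D \<le> pr u" if u: "u \<in> Ub (Rep_dm C)" for u
      proof -
        have "C \<le> pr u" using u unfolding dm_le_iff Rep_pr Ub_def Lb_def by auto
        hence Cur: "C \<le> Lattices.inf (pr u) (pr r)" using C by simp
        have "Lattices.sup C (pr (c r)) \<le> Lattices.sup (Lattices.inf (pr u) (pr r)) (pr (c r))"
          using Cur by (simp add: le_supI1)
        hence "D \<le> Lattices.inf (Lattices.sup (Lattices.inf (pr u) (pr r)) (pr (c r))) (pr r)"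
          unfolding D_def ncomp_pr[OF pwc] by (simp add: le_infI1)
        also have "\<dots> = Lattices.inf (pr u) (pr r)" by (rule po_dm[OF pwc po])
        also have "\<dots> \<le> pr u" by simp
        finally show ?thesis .
      qed
      have "Rep_dm D \<subseteq> Rep_dm C"
      proof
        fix p assume p: "p \<in> Rep_dm D"
        have "\<forall>u\<in>Ub (Rep_dm C). p \<le> u"
        proof
          fix u assume "u \<in> Ub (Rep_dm C)"
          hence "Rep_dm D \<subseteq> Lb {u}" using Du unfolding dm_le_iff Rep_pr by blast
          thus "p \<le> u" using p unfolding Lb_def by blast
        qed
        thus "p \<in> Rep_dm C" using closed_mem[OF Rep_closed[of C]] by blast
      qed
      thus ?thesis by (simp add: dm_le_iff)
    qed
    ultimately show "C = Lattices.inf (Lattices.sup C (ncomp c (pr r))) (pr r)"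
      unfolding D_def by (rule order.antisym)
  qed
qed

lemma atom_pr:
  assumes a: "bot < a" and na: "\<And>y. bot < y \<Longrightarrow> y < (a :: 'a dm) \<Longrightarrow> False"
  shows "\<exists>p. a = pr p"
proof -
  have "Rep_dm a \<noteq> {bot}"
  proof
    assume "Rep_dm a = {bot}"
    hence "Rep_dm a = Rep_dm (bot :: 'a dm)" by (simp add: Rep_bot Lb_UNIV_bot)
    hence "a = bot" by (simp add: Rep_dm_inject)
    thus False using a by simp
  qed
  moreover have "bot \<in> Rep_dm a" by (rule bot_in_closed[OF Rep_closed])
  ultimately obtain p where p: "p \<in> Rep_dm a" "p \<noteq> bot" by blast
  have le: "pr p \<le> a"
    unfolding dm_le_iff Rep_pr
  proof
    fix q assume "q \<in> Lb {p}"
    hence "q \<le> p" by (simp add: Lb_def)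
    moreover have "\<forall>u\<in>Ub (Rep_dm a). p \<le> u" using p closed_mem[OF Rep_closed[of a]] by blast
    ultimately have "\<forall>u\<in>Ub (Rep_dm a). q \<le> u" using order_trans by blast
    thus "q \<in> Rep_dm a" using closed_mem[OF Rep_closed[of a]] by blast
  qed
  have "pr p \<noteq> bot"
  proof
    assume "pr p = bot"
    hence "Rep_dm (pr p) = {bot}" by (simp add: Rep_bot Lb_UNIV_bot)
    moreover have "p \<in> Rep_dm (pr p)" by (simp add: Rep_pr Lb_def)
    ultimately show False using p by blast
  qed
  hence "bot < pr p" by (simp add: bot.not_eq_extremum)
  hence "\<not> pr p < a" using na by blast
  hence "a = pr p" using le by simp
  thus ?thesis by blast
qed

lemma Q_dm: "ortho.Q (ncomp c) x"
proof -
  interpret O: ortho "ncomp c" by (rule ortho_ncomp[OF pwc])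
  show ?thesis
  proof (rule O.Q_all[OF dm_finite])
    fix a :: "'a dm"
    assume "bot < a" "\<And>y. bot < y \<Longrightarrow> y < a \<Longrightarrow> False"
    then obtain p where ap: "a = pr p" using atom_pr by blast
    have "a = ncomp c (pr (c p))" using ap by (simp add: ncomp_pr[OF pwc] cc[OF pwc])
    thus "O.Q a" using O.Q'_Q[OF Q'_pr] by simp
  qed
qed

end

lemma DM_carrier: "carrier DM = DM_set" by (simp add: DM_def)

lemma DM_po: "partial_order (DM :: 'a::order set gorder)"
  by unfold_locales (auto simp: DM_def)

lemma DM_least:
  assumes A: "A \<subseteq> DM_set"
  shows "least DM (Lb (Ub (\<Union>A))) (Upper DM A)"
proof -
  have m: "Lb (Ub (\<Union>A)) \<in> Upper DM A"
    unfolding Upper_def DM_def using closed_Lb sub_LbUb[of "\<Union>A"] by auto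
  have "Lb (Ub (\<Union>A)) \<subseteq> x" if x: "x \<in> Upper DM A" for x
  proof -
    have xc: "x \<in> DM_set" and "\<Union>A \<subseteq> x" using x A unfolding Upper_def DM_def by auto
    hence "Lb (Ub (\<Union>A)) \<subseteq> Lb (Ub x)" by (intro Lb_anti Ub_anti)
    thus ?thesis using xc unfolding DM_set_def by simp
  qed
  thus ?thesis using m unfolding least_def by (auto simp: DM_def Upper_def)
qed

lemma DM_greatest:
  assumes A: "A \<subseteq> DM_set"
  shows "greatest DM (\<Inter>A) (Lower DM A)"
proof -
  have m: "\<Inter>A \<in> Lower DM A"
    unfolding Lower_def DM_def using closed_Inter[OF A] by auto
  have "x \<subseteq> \<Inter>A" if x: "x \<in> Lower DM A" for x
    using x A unfolding Lower_def DM_def by auto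
  thus ?thesis using m unfolding greatest_def by (auto simp: DM_def Lower_def)
qed

lemma DM_cl: "complete_lattice (DM :: 'a::order set gorder)"
proof -
  have "complete_lattice_axioms (DM :: 'a set gorder)"
    unfolding complete_lattice_axioms_def DM_carrier using DM_least DM_greatest by blast
  thus ?thesis using DM_po by (simp add: complete_lattice_def)
qed

lemma least_DM_unique: "least DM a S \<Longrightarrow> least DM b S \<Longrightarrow> a = b"
  unfolding least_def DM_def by auto
lemma greatest_DM_unique: "greatest DM a S \<Longrightarrow> greatest DM b S \<Longrightarrow> a = b"
  unfolding greatest_def DM_def by auto

lemma DM_join: "X \<in> DM_set \<Longrightarrow> Y \<in> DM_set \<Longrightarrow> X \<squnion>\<^bsub>DM\<^esub> Y = Lb (Ub (X \<union> Y))"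
proof -
  assume "X \<in> DM_set" "Y \<in> DM_set"
  hence l: "least DM (Lb (Ub (X \<union> Y))) (Upper DM {X, Y})" using DM_least[of "{X, Y}"] by simp
  show ?thesis unfolding join_def Lattice.sup_def
    by (rule some_equality) (use l least_DM_unique in auto)
qed

lemma DM_meet: "X \<in> DM_set \<Longrightarrow> Y \<in> DM_set \<Longrightarrow> X \<sqinter>\<^bsub>DM\<^esub> Y = X \<inter> Y"
proof -
  assume "X \<in> DM_set" "Y \<in> DM_set"
  hence l: "greatest DM (X \<inter> Y) (Lower DM {X, Y})" using DM_greatest[of "{X, Y}"] by simp
  show ?thesis unfolding meet_def Lattice.inf_def
    by (rule some_equality) (use l greatest_DM_unique in auto)
qed

lemma DM_top: "\<top>\<^bsub>DM\<^esub> = UNIV"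
proof -
  have g: "greatest DM UNIV (carrier DM)" unfolding greatest_def DM_def using UNIV_closed by auto
  show ?thesis unfolding Order.top_def
    by (rule some_equality) (use g greatest_DM_unique in blast)+
qed

lemma LbUNIV_sub: "X \<in> DM_set \<Longrightarrow> Lb UNIV \<subseteq> X"
proof -
  assume X: "X \<in> DM_set"
  have "Lb UNIV \<subseteq> Lb (Ub X)" by (intro Lb_anti) blast
  thus ?thesis using X unfolding DM_set_def by simp
qed

lemma least_LbUNIV: "least DM (Lb UNIV) (carrier DM)"
  unfolding least_def DM_def by (simp add: closed_Lb LbUNIV_sub)

lemma DM_bottom: "\<bottom>\<^bsub>DM\<^esub> = Lb UNIV"
proof -
  have g: "least DM (Lb UNIV) (carrier DM)" by (rule least_LbUNIV)
  show ?thesis unfolding bottom_def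
    by (rule some_equality) (use g least_DM_unique in blast)+
qed

lemma DM_bl: "bounded_lattice (DM :: 'a::order set gorder)"
proof -
  have wpo: "weak_partial_order (DM :: 'a set gorder)" using DM_po unfolding partial_order_def by blast
  have b: "\<exists>x. least (DM :: 'a set gorder) x (carrier DM)"
  proof -
    show ?thesis using least_LbUNIV by blast
  qed
  have t: "\<exists>x. greatest (DM :: 'a set gorder) x (carrier DM)"
    unfolding greatest_def DM_def using UNIV_closed by auto
  show ?thesis
    unfolding bounded_lattice_def weak_partial_order_bottom_def weak_partial_order_top_def
      weak_partial_order_bottom_axioms_def weak_partial_order_top_axioms_def
    using wpo b t complete_lattice_lattice[OF DM_cl] by blast
qed

lemma ball_DM: "(\<forall>X\<in>carrier (DM :: 'a::order set gorder). P X) \<longleftrightarrow> (\<forall>x. P (Rep_dm x))"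
proof -
  have r: "(DM_set :: 'a set set) = range (Rep_dm :: 'a dm \<Rightarrow> 'a set)"
    using type_definition.Rep_range[OF type_definition_dm] by (rule sym)
  show ?thesis unfolding DM_carrier r by simp
qed

lemma j_Rep: "Rep_dm x \<squnion>\<^bsub>DM\<^esub> Rep_dm y = Rep_dm (Lattices.sup x y)"
  by (simp add: DM_join Rep_closed Rep_sup)
lemma m_Rep: "Rep_dm x \<sqinter>\<^bsub>DM\<^esub> Rep_dm y = Rep_dm (Lattices.inf x y)"
  by (simp add: DM_meet Rep_closed Rep_inf)
lemma c_Rep: "DM_comp c (Rep_dm x) = Rep_dm (ncomp c x)"
  by (simp add: DM_comp_def Rep_ncomp)
lemma t_Rep: "\<top>\<^bsub>DM\<^esub> = Rep_dm (Orderings.top :: 'a::order dm)"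
  by (simp add: DM_top Rep_top)
lemma b_Rep: "\<bottom>\<^bsub>DM\<^esub> = Rep_dm (bot :: 'a::order dm)"
  by (simp add: DM_bottom Rep_bot)
lemma le_Rep: "Rep_dm x \<sqsubseteq>\<^bsub>DM\<^esub> Rep_dm y \<longleftrightarrow> x \<le> y"
  by (simp add: DM_def dm_le_iff)
lemma carr_Rep: "Rep_dm x \<in> carrier DM"
  by (simp add: DM_carrier Rep_closed)

theorem corollary4:
  fixes c :: "'a::{finite,order_bot,order_top} \<Rightarrow> 'a"
  assumes "poset_with_complementation c"
    and "pseudo_orthomodular c"
  shows "complete_lattice (DM :: 'a set gorder)
    \<and> orthomodular_lattice (DM :: 'a set gorder) (DM_comp c)
    \<and> left_residuated (DM :: 'a set gorder) (DM_odot c) (DM_arrow c)"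
proof -
  interpret O: ortho "ncomp c" by (rule ortho_ncomp[OF assms(1)])
  have Qall: "\<And>x. O.Q x" by (rule Q_dm[OF assms])
  have lwc: "lattice_with_complementation (DM :: 'a set gorder) (DM_comp c)"
    unfolding lattice_with_complementation_def
    by (simp add: DM_bl ball_DM j_Rep m_Rep c_Rep t_Rep b_Rep le_Rep carr_Rep Rep_dm_inject
        O.nn O.inf_n O.sup_n O.anti)
  have oml: "orthomodular_lattice (DM :: 'a set gorder) (DM_comp c)"
    unfolding orthomodular_lattice_def
    using lwc by (simp add: ball_DM j_Rep m_Rep c_Rep Rep_dm_inject O.oml[OF Qall, symmetric])
  have lr: "left_residuated (DM :: 'a set gorder) (DM_odot c) (DM_arrow c)"
    unfolding left_residuated_def DM_odot_def DM_arrow_def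
    by (simp add: complete_lattice_lattice[OF DM_cl] ball_DM j_Rep m_Rep c_Rep t_Rep le_Rep
        carr_Rep Rep_dm_inject O.n_top O.resid[OF Qall])
  show ?thesis using DM_cl oml lr by blast
qed

end
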